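(* Let $n\ge 2$, $\gamma<1$ real and $z_1,\dots,z_n\in\mathbb{C}$ not all zero with $\frac{\gamma}{n}\big(\sum_\ell z_\ell\big)^2=\sum_\ell z_\ell^2$; write $z_\ell=\alpha_\ell+i\beta_\ell$ and $\vec\alpha=(\alpha_\ell)$, $\vec\beta=(\beta_\ell)$, $\mathbf 1=(1,\dots,1)\in\mathbb{R}^n$. The following are equivalent: (a) there are $a,b,c\in\mathbb{R}$, not all zero, with $a\vec\alpha+b\vec\beta+c\mathbf 1=0$; (b) there is $\lambda\in\mathbb{C}\setminus\{0\}$ with $\lambda z_\ell=\alpha'_\ell+i\beta$ for all $\ell$, where $\alpha'_\ell\in\mathbb{R}$ and $\beta\in\mathbb{R}$ is independent of $\ell$; (c) $n\sum_\ell|z_\ell|^2+(\gamma-2)\big|\sum_\ell z_\ell\big|^2=0$. Moreover, in case (b) necessarily $\beta\ne0$, $\sum_\ell\alpha'_\ell=0$ and $\gamma=1-\frac{1}{n\beta^2}\sum_\ell\alpha_\ell'^2$. Also, if $\sum_\ell z_\ell\ne0$ there is $\lambda\in\mathbb{C}\setminus\{0\}$ such that $w_\ell=\lambda z_\ell$ satisfy $\sum\operatorname{Re}w_\ell=1$, $\sum\operatorname{Im}w_\ell=0$, $\sum\operatorname{Re}w_\ell\operatorname{Im}w_\ell=0$. *)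

theory Defs
  imports Complex_Main
begin

end

theory Submission
  imports Defs
begin

lemma cs_sum:
  fixes f :: "nat \<Rightarrow> real"
  shows "(\<Sum>l\<in>I. f l)^2 \<le> real (card I) * (\<Sum>l\<in>I. (f l)^2)"
proof (cases "finite I")
  case True
  define A where "A = (\<Sum>l\<in>I. f l)"
  define c where "c = real (card I)"
  have "0 \<le> (\<Sum>l\<in>I. (c * f l - A)^2)" by (simp add: sum_nonneg)
  also have "\<dots> = (\<Sum>l\<in>I. c^2 * (f l)^2 - 2 * c * A * f l + A^2)"
    by (rule sum.cong) (auto simp: power2_eq_square algebra_simps)
  also have "\<dots> = c^2 * (\<Sum>l\<in>I. (f l)^2) - 2 * c * A * A + c * A^2"
    using True by (simp add: sum_subtractf sum.distrib sum_distrib_left A_def c_def)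
  also have "\<dots> = c * (c * (\<Sum>l\<in>I. (f l)^2) - A^2)"
    by (simp add: power2_eq_square algebra_simps)
  finally have h: "0 \<le> c * (c * (\<Sum>l\<in>I. (f l)^2) - A^2)" .
  show ?thesis
  proof (cases "c = 0")
    case True
    then have "I = {}" using \<open>finite I\<close> by (simp add: c_def)
    then show ?thesis by simp
  next
    case False
    then have "c > 0" by (simp add: c_def)
    with h have "0 \<le> c * (\<Sum>l\<in>I. (f l)^2) - A^2"
      by (simp add: zero_le_mult_iff)
    then show ?thesis by (simp add: A_def c_def)
  qed
qed simp



lemma scaled:
  fixes z :: "nat \<Rightarrow> complex" and lam :: complex
  assumes "complex_of_real \<gamma> / of_nat n * (\<Sum>l\<in>I. z l)\<^sup>2 = (\<Sum>l\<in>I. (z l)\<^sup>2)"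
  shows "complex_of_real (\<gamma> / n) * (\<Sum>l\<in>I. lam * z l)\<^sup>2 = (\<Sum>l\<in>I. (lam * z l)\<^sup>2)"
proof -
  have "(\<Sum>l\<in>I. (lam * z l)\<^sup>2) = lam^2 * (\<Sum>l\<in>I. (z l)\<^sup>2)"
    by (simp add: power_mult_distrib sum_distrib_left)
  also have "\<dots> = lam^2 * (complex_of_real \<gamma> / of_nat n * (\<Sum>l\<in>I. z l)\<^sup>2)" using assms by simp
  also have "\<dots> = complex_of_real (\<gamma> / n) * (lam * (\<Sum>l\<in>I. z l))\<^sup>2"
    by (simp add: power_mult_distrib)
  finally show ?thesis by (simp add: sum_distrib_left)
qed

lemma scaled_ReIm:
  fixes w :: "nat \<Rightarrow> complex"
  assumes "complex_of_real c * (\<Sum>l\<in>I. w l)\<^sup>2 = (\<Sum>l\<in>I. (w l)\<^sup>2)"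
  shows "c * ((\<Sum>l\<in>I. Re (w l))^2 - (\<Sum>l\<in>I. Im (w l))^2) = (\<Sum>l\<in>I. (Re (w l))^2 - (Im (w l))^2)"
    and "c * (2 * (\<Sum>l\<in>I. Re (w l)) * (\<Sum>l\<in>I. Im (w l))) = (\<Sum>l\<in>I. 2 * Re (w l) * Im (w l))"
proof -
  have "Re (complex_of_real c * (\<Sum>l\<in>I. w l)\<^sup>2) = Re (\<Sum>l\<in>I. (w l)\<^sup>2)" using assms by simp
  then show "c * ((\<Sum>l\<in>I. Re (w l))^2 - (\<Sum>l\<in>I. Im (w l))^2) = (\<Sum>l\<in>I. (Re (w l))^2 - (Im (w l))^2)"
    by (simp add: Re_power2 Im_power2 sum_subtractf)
  have "Im (complex_of_real c * (\<Sum>l\<in>I. w l)\<^sup>2) = Im (\<Sum>l\<in>I. (w l)\<^sup>2)" using assms by simp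
  then show "c * (2 * (\<Sum>l\<in>I. Re (w l)) * (\<Sum>l\<in>I. Im (w l))) = (\<Sum>l\<in>I. 2 * Re (w l) * Im (w l))"
    by (simp add: Re_power2 Im_power2)
qed




theorem lemma6p3:
  fixes n :: nat and \<gamma> :: real and z :: "nat \<Rightarrow> complex"
  assumes hn: "n \<ge> 2"
    and h\<gamma>: "\<gamma> < 1"
    and hnz: "\<exists>l\<in>{1..n}. z l \<noteq> 0"
    and hrel: "complex_of_real \<gamma> / of_nat n * (\<Sum>l=1..n. z l)\<^sup>2 = (\<Sum>l=1..n. (z l)\<^sup>2)"
  shows "((\<exists>a b c :: real. (a \<noteq> 0 \<or> b \<noteq> 0 \<or> c \<noteq> 0) \<and>
             (\<forall>l\<in>{1..n}. a * Re (z l) + b * Im (z l) + c = 0))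
          \<longleftrightarrow>
          (\<exists>lam :: complex. lam \<noteq> 0 \<and> (\<exists>(\<alpha>' :: nat \<Rightarrow> real) (\<beta> :: real).
             \<forall>l\<in>{1..n}. lam * z l = complex_of_real (\<alpha>' l) + \<i> * complex_of_real \<beta>)))
       \<and> ((\<exists>lam :: complex. lam \<noteq> 0 \<and> (\<exists>(\<alpha>' :: nat \<Rightarrow> real) (\<beta> :: real).
             \<forall>l\<in>{1..n}. lam * z l = complex_of_real (\<alpha>' l) + \<i> * complex_of_real \<beta>))
          \<longleftrightarrow>
          real n * (\<Sum>l=1..n. (cmod (z l))\<^sup>2) + (\<gamma> - 2) * (cmod (\<Sum>l=1..n. z l))\<^sup>2 = 0)
       \<and> (\<forall>(lam :: complex) (\<alpha>' :: nat \<Rightarrow> real) (\<beta> :: real).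
             lam \<noteq> 0 \<and> (\<forall>l\<in>{1..n}. lam * z l = complex_of_real (\<alpha>' l) + \<i> * complex_of_real \<beta>)
             \<longrightarrow> \<beta> \<noteq> 0 \<and> (\<Sum>l=1..n. \<alpha>' l) = 0
                 \<and> \<gamma> = 1 - (\<Sum>l=1..n. (\<alpha>' l)\<^sup>2) / (real n * \<beta>\<^sup>2))
       \<and> ((\<Sum>l=1..n. z l) \<noteq> 0 \<longrightarrow>
          (\<exists>lam :: complex. lam \<noteq> 0 \<and>
             (\<Sum>l=1..n. Re (lam * z l)) = 1 \<and> (\<Sum>l=1..n. Im (lam * z l)) = 0 \<and>
             (\<Sum>l=1..n. Re (lam * z l) * Im (lam * z l)) = 0))"
  
proof -
  define I where "I = {1..n::nat}"
  have finI: "finite I" and cardI: "card I = n" by (simp_all add: I_def)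
  have npos: "real n > 0" using hn by simp
  have oneI: "1 \<in> I" using hn by (simp add: I_def)
  have hrelI: "complex_of_real \<gamma> / of_nat n * (\<Sum>l\<in>I. z l)\<^sup>2 = (\<Sum>l\<in>I. (z l)\<^sup>2)"
    using hrel by (simp add: I_def)
  have hnzI: "\<exists>l\<in>I. z l \<noteq> 0" using hnz by (simp add: I_def)
  note sc = scaled_ReIm[OF scaled[OF hrelI]]
  define B where "B \<equiv> \<lambda>lam::complex. lam \<noteq> 0 \<and> (\<exists>(\<alpha>' :: nat \<Rightarrow> real) (\<beta> :: real).
             \<forall>l\<in>I. lam * z l = complex_of_real (\<alpha>' l) + \<i> * complex_of_real \<beta>)"
  have P3: "\<beta> \<noteq> 0 \<and> (\<Sum>l\<in>I. \<alpha>' l) = 0 \<and> \<gamma> = 1 - (\<Sum>l\<in>I. (\<alpha>' l)\<^sup>2) / (real n * \<beta>\<^sup>2)"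
    if lam0: "lam \<noteq> 0" and hw: "\<forall>l\<in>I. lam * z l = complex_of_real (\<alpha>' l) + \<i> * complex_of_real \<beta>"
    for lam \<alpha>' \<beta>
  proof -
    have hre: "\<forall>l\<in>I. Re (lam * z l) = \<alpha>' l" and him: "\<forall>l\<in>I. Im (lam * z l) = \<beta>"
      using hw by auto
    define A where "A = (\<Sum>l\<in>I. \<alpha>' l)"
    define Q where "Q = (\<Sum>l\<in>I. (\<alpha>' l)\<^sup>2)"
    have sr: "(\<Sum>l\<in>I. Re (lam * z l)) = A" using hre by (simp add: A_def)
    have si: "(\<Sum>l\<in>I. Im (lam * z l)) = real n * \<beta>" using him by (simp add: cardI)
    have s1: "(\<Sum>l\<in>I. (Re (lam * z l))^2 - (Im (lam * z l))^2) = Q - real n * \<beta>^2"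
    proof -
      have "(\<Sum>l\<in>I. (Re (lam * z l))^2 - (Im (lam * z l))^2) = (\<Sum>l\<in>I. (\<alpha>' l)^2 - \<beta>^2)"
        using hre him by (intro sum.cong) auto
      then show ?thesis by (simp add: sum_subtractf Q_def cardI)
    qed
    have s2: "(\<Sum>l\<in>I. 2 * Re (lam * z l) * Im (lam * z l)) = 2 * \<beta> * A"
    proof -
      have "(\<Sum>l\<in>I. 2 * Re (lam * z l) * Im (lam * z l)) = (\<Sum>l\<in>I. (2 * \<beta>) * \<alpha>' l)"
        using hre him by (intro sum.cong) auto
      then show ?thesis by (simp add: sum_distrib_left A_def)
    qed
    have R: "\<gamma> / n * (A^2 - (real n * \<beta>)^2) = Q - real n * \<beta>^2"
      using sc(1)[of lam] sr si s1 by simp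
    have Im: "\<gamma> / n * (2 * A * (real n * \<beta>)) = 2 * \<beta> * A"
      using sc(2)[of lam] sr si s2 by simp
    have Im': "(\<gamma> - 1) * (A * \<beta>) = 0"
      using Im npos by (simp add: field_simps)
    have b0: "\<beta> \<noteq> 0"
    proof
      assume "\<beta> = 0"
      then have R0: "\<gamma> * A^2 = real n * Q" using R npos by (simp add: field_simps)
      have cs: "A^2 \<le> real n * Q" using cs_sum[of \<alpha>' I] by (simp add: A_def Q_def cardI)
      have "(1 - \<gamma>) * A^2 \<le> 0" using R0 cs by (simp add: algebra_simps)
      moreover have "0 < 1 - \<gamma>" using h\<gamma> by simp
      ultimately have "A^2 \<le> 0" by (simp add: mult_le_0_iff)
      then have "A^2 = 0" by (simp add: order_antisym)
      then have "Q = 0" using R0 npos by simp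
      then have "\<forall>l\<in>I. (\<alpha>' l)^2 = 0" using finI by (simp add: Q_def sum_nonneg_eq_0_iff)
      then have "\<forall>l\<in>I. z l = 0" using hw lam0 \<open>\<beta> = 0\<close> by auto
      then show False using hnzI by blast
    qed
    have A0: "A = 0" using Im' b0 h\<gamma> by simp
    have "\<gamma> * (real n * \<beta>^2) = real n * \<beta>^2 - Q"
    proof -
      have "\<gamma> / n * (A^2 - (real n * \<beta>)^2) = - (\<gamma> * (real n * \<beta>^2))"
        using A0 npos by (simp add: power2_eq_square)
      then show ?thesis using R by linarith
    qed
    then have "\<gamma> = 1 - Q / (real n * \<beta>\<^sup>2)" using npos b0 by (simp add: field_simps)
    then show ?thesis using b0 A0 by (simp add: A_def Q_def)
  qed
  have AB: "(\<exists>a b c :: real. (a \<noteq> 0 \<or> b \<noteq> 0 \<or> c \<noteq> 0) \<and>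
             (\<forall>l\<in>I. a * Re (z l) + b * Im (z l) + c = 0)) \<longleftrightarrow> (\<exists>lam. B lam)"
  proof
    assume "\<exists>a b c :: real. (a \<noteq> 0 \<or> b \<noteq> 0 \<or> c \<noteq> 0) \<and> (\<forall>l\<in>I. a * Re (z l) + b * Im (z l) + c = 0)"
    then obtain a b c :: real where nz: "a \<noteq> 0 \<or> b \<noteq> 0 \<or> c \<noteq> 0"
      and h: "\<forall>l\<in>I. a * Re (z l) + b * Im (z l) + c = 0" by blast
    have ab: "Complex b a \<noteq> 0"
    proof
      assume "Complex b a = 0"
      then have "a = 0" "b = 0" by (auto simp: complex_eq_iff)
      then show False using nz h oneI by auto
    qed
    have "\<forall>l\<in>I. Complex b a * z l = complex_of_real (Re (Complex b a * z l)) + \<i> * complex_of_real (- c)"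
      using h by (auto simp: complex_eq_iff algebra_simps)
    then have "B (Complex b a)" using ab unfolding B_def
      by (intro conjI exI[of _ "\<lambda>l. Re (Complex b a * z l)"] exI[of _ "- c"])
    then show "\<exists>lam. B lam" by blast
  next
    assume "\<exists>lam. B lam"
    then obtain lam \<alpha>' \<beta> where lam0: "lam \<noteq> 0"
      and hw: "\<forall>l\<in>I. lam * z l = complex_of_real (\<alpha>' l) + \<i> * complex_of_real \<beta>"
      unfolding B_def by blast
    have "\<forall>l\<in>I. Im lam * Re (z l) + Re lam * Im (z l) + (- \<beta>) = 0"
    proof
      fix l assume "l \<in> I"
      then have "Im (lam * z l) = \<beta>" using hw by auto
      then show "Im lam * Re (z l) + Re lam * Im (z l) + (- \<beta>) = 0" by (simp add: algebra_simps)
    qed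
    moreover have "Im lam \<noteq> 0 \<or> Re lam \<noteq> 0 \<or> - \<beta> \<noteq> 0" using lam0 by (auto simp: complex_eq_iff)
    ultimately show "\<exists>a b c :: real. (a \<noteq> 0 \<or> b \<noteq> 0 \<or> c \<noteq> 0) \<and>
             (\<forall>l\<in>I. a * Re (z l) + b * Im (z l) + c = 0)" by blast
  qed
  have normw: "(\<Sum>l\<in>I. (cmod (lam * z l))\<^sup>2) = (cmod lam)^2 * (\<Sum>l\<in>I. (cmod (z l))\<^sup>2)"
       "(cmod (\<Sum>l\<in>I. lam * z l))\<^sup>2 = (cmod lam)^2 * (cmod (\<Sum>l\<in>I. z l))\<^sup>2" for lam
    by (simp_all add: norm_mult power_mult_distrib sum_distrib_left[symmetric])
  have BC: "(\<exists>lam. B lam) \<longleftrightarrow>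
          real n * (\<Sum>l\<in>I. (cmod (z l))\<^sup>2) + (\<gamma> - 2) * (cmod (\<Sum>l\<in>I. z l))\<^sup>2 = 0"
  proof
    assume "\<exists>lam. B lam"
    then obtain lam \<alpha>' \<beta> where lam0: "lam \<noteq> 0"
      and hw: "\<forall>l\<in>I. lam * z l = complex_of_real (\<alpha>' l) + \<i> * complex_of_real \<beta>"
      unfolding B_def by blast
    note p = P3[OF lam0 hw]
    define Q where "Q = (\<Sum>l\<in>I. (\<alpha>' l)\<^sup>2)"
    have hre: "\<forall>l\<in>I. Re (lam * z l) = \<alpha>' l" and him: "\<forall>l\<in>I. Im (lam * z l) = \<beta>"
      using hw by auto
    have n1: "(\<Sum>l\<in>I. (cmod (lam * z l))\<^sup>2) = Q + real n * \<beta>^2"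
    proof -
      have "(\<Sum>l\<in>I. (cmod (lam * z l))\<^sup>2) = (\<Sum>l\<in>I. (\<alpha>' l)^2 + \<beta>^2)"
        using hre him by (intro sum.cong) (auto simp: cmod_power2)
      then show ?thesis by (simp add: sum.distrib Q_def cardI)
    qed
    have n2: "(cmod (\<Sum>l\<in>I. lam * z l))\<^sup>2 = (real n * \<beta>)^2"
    proof -
      have "(\<Sum>l\<in>I. Re (lam * z l)) = 0" using hre p by simp
      moreover have "(\<Sum>l\<in>I. Im (lam * z l)) = real n * \<beta>" using him by (simp add: cardI)
      ultimately show ?thesis by (simp add: cmod_power2)
    qed
    have g: "\<gamma> = 1 - Q / (real n * \<beta>\<^sup>2)" using p Q_def by simp
    have "real n * (\<Sum>l\<in>I. (cmod (lam * z l))\<^sup>2) + (\<gamma> - 2) * (cmod (\<Sum>l\<in>I. lam * z l))\<^sup>2 = 0"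
      unfolding n1 n2 g using npos p by (simp add: field_simps power2_eq_square)
    then have "(cmod lam)^2 * (real n * (\<Sum>l\<in>I. (cmod (z l))\<^sup>2) + (\<gamma> - 2) * (cmod (\<Sum>l\<in>I. z l))\<^sup>2) = 0"
      unfolding normw by (simp add: algebra_simps)
    then show "real n * (\<Sum>l\<in>I. (cmod (z l))\<^sup>2) + (\<gamma> - 2) * (cmod (\<Sum>l\<in>I. z l))\<^sup>2 = 0"
      using lam0 by simp
  next
    assume C: "real n * (\<Sum>l\<in>I. (cmod (z l))\<^sup>2) + (\<gamma> - 2) * (cmod (\<Sum>l\<in>I. z l))\<^sup>2 = 0"
    define S where "S = (\<Sum>l\<in>I. z l)"
    have S0: "S \<noteq> 0"
    proof
      assume "S = 0"
      then have "(\<Sum>l\<in>I. (cmod (z l))\<^sup>2) = 0" using C npos by (simp add: S_def)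
      then have "\<forall>l\<in>I. (cmod (z l))\<^sup>2 = 0" using finI by (simp add: sum_nonneg_eq_0_iff)
      then show False using hnzI by auto
    qed
    define lam where "lam = \<i> * of_nat n / S"
    have lam0: "lam \<noteq> 0" using S0 npos by (simp add: lam_def)
    have sw: "(\<Sum>l\<in>I. lam * z l) = \<i> * of_nat n"
    proof -
      have "(\<Sum>l\<in>I. lam * z l) = lam * S" by (simp add: S_def sum_distrib_left)
      then show ?thesis using S0 by (simp add: lam_def)
    qed
    have sr: "(\<Sum>l\<in>I. Re (lam * z l)) = 0"
      using arg_cong[OF sw, of Re] by simp
    have si: "(\<Sum>l\<in>I. Im (lam * z l)) = real n"
      using arg_cong[OF sw, of Im] by simp
    have R: "\<gamma> / n * (0 - (real n)^2) = (\<Sum>l\<in>I. (Re (lam * z l))^2 - (Im (lam * z l))^2)"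
      using sc(1)[of lam] sr si by simp
    then have R': "(\<Sum>l\<in>I. (Re (lam * z l))^2) - (\<Sum>l\<in>I. (Im (lam * z l))^2) = - \<gamma> * real n"
      using npos by (simp add: sum_subtractf power2_eq_square)
    have "(cmod lam)^2 * (real n * (\<Sum>l\<in>I. (cmod (z l))\<^sup>2) + (\<gamma> - 2) * (cmod (\<Sum>l\<in>I. z l))\<^sup>2) = 0"
      using C by simp
    then have Cw: "real n * (\<Sum>l\<in>I. (cmod (lam * z l))\<^sup>2) + (\<gamma> - 2) * (cmod (\<Sum>l\<in>I. lam * z l))\<^sup>2 = 0"
      unfolding normw by (simp add: algebra_simps)
    have "real n * ((\<Sum>l\<in>I. (Re (lam * z l))^2) + (\<Sum>l\<in>I. (Im (lam * z l))^2)) + (\<gamma> - 2) * (real n)^2 = 0"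
    proof -
      have e1: "(\<Sum>l\<in>I. (cmod (lam * z l))\<^sup>2) = (\<Sum>l\<in>I. (Re (lam * z l))^2) + (\<Sum>l\<in>I. (Im (lam * z l))^2)"
        by (simp only: cmod_power2 sum.distrib)
      have e2: "(cmod (\<Sum>l\<in>I. lam * z l))\<^sup>2 = (real n)^2" unfolding sw by (simp add: norm_mult)
      show ?thesis using Cw unfolding e1 e2 .
    qed
    then have C': "(\<Sum>l\<in>I. (Re (lam * z l))^2) + (\<Sum>l\<in>I. (Im (lam * z l))^2) + (\<gamma> - 2) * real n = 0"
    proof -
      have gen: "X + Y + (\<gamma> - 2) * real n = 0" if h: "real n * (X + Y) + (\<gamma> - 2) * (real n)^2 = 0" for X Y
      proof -
        have "real n * (X + Y + (\<gamma> - 2) * real n) = 0" using h by (simp add: power2_eq_square algebra_simps)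
        then show ?thesis using npos by simp
      qed
      show ?thesis by (rule gen) fact
    qed
    have sy2: "(\<Sum>l\<in>I. (Im (lam * z l))^2) = real n"
    proof -
      have "(\<gamma> - 2) * real n = \<gamma> * real n - 2 * real n" "- \<gamma> * real n = - (\<gamma> * real n)" by (simp_all add: algebra_simps)
      then show ?thesis using R' C' by linarith
    qed
    have "(\<Sum>l\<in>I. (Im (lam * z l) - 1)^2) = (\<Sum>l\<in>I. (Im (lam * z l))^2 - 2 * Im (lam * z l) + 1)"
      by (intro sum.cong) (auto simp: power2_eq_square algebra_simps)
    also have "\<dots> = 0" using sy2 si by (simp add: sum.distrib sum_subtractf sum_distrib_left[symmetric] cardI)
    finally have "\<forall>l\<in>I. (Im (lam * z l) - 1)^2 = 0" using finI by (simp add: sum_nonneg_eq_0_iff)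
    then have "\<forall>l\<in>I. lam * z l = complex_of_real (Re (lam * z l)) + \<i> * complex_of_real 1"
      by (auto simp: complex_eq_iff)
    then have "B lam" using lam0 unfolding B_def
      by (intro conjI exI[of _ "\<lambda>l. Re (lam * z l)"] exI[of _ "1"])
    then show "\<exists>lam. B lam" by blast
  qed
  have D: "(\<Sum>l\<in>I. z l) \<noteq> 0 \<longrightarrow>
          (\<exists>lam :: complex. lam \<noteq> 0 \<and>
             (\<Sum>l\<in>I. Re (lam * z l)) = 1 \<and> (\<Sum>l\<in>I. Im (lam * z l)) = 0 \<and>
             (\<Sum>l\<in>I. Re (lam * z l) * Im (lam * z l)) = 0)"
  proof
    assume S0: "(\<Sum>l\<in>I. z l) \<noteq> 0"
    define lam where "lam = 1 / (\<Sum>l\<in>I. z l)"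
    have lam0: "lam \<noteq> 0" using S0 by (simp add: lam_def)
    have sw: "(\<Sum>l\<in>I. lam * z l) = 1"
    proof -
      have "(\<Sum>l\<in>I. lam * z l) = lam * (\<Sum>l\<in>I. z l)" by (simp add: sum_distrib_left)
      then show ?thesis using S0 by (simp add: lam_def)
    qed
    have sr: "(\<Sum>l\<in>I. Re (lam * z l)) = 1"
      using arg_cong[OF sw, of Re] by simp
    have si: "(\<Sum>l\<in>I. Im (lam * z l)) = 0"
      using arg_cong[OF sw, of Im] by simp
    have "(\<Sum>l\<in>I. 2 * Re (lam * z l) * Im (lam * z l)) = 0"
      using sc(2)[of lam] sr si by simp
    then have "(\<Sum>l\<in>I. Re (lam * z l) * Im (lam * z l)) = 0"
    proof -
      assume h0: "(\<Sum>l\<in>I. 2 * Re (lam * z l) * Im (lam * z l)) = 0"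
      have "(\<Sum>l\<in>I. 2 * Re (lam * z l) * Im (lam * z l)) = 2 * (\<Sum>l\<in>I. Re (lam * z l) * Im (lam * z l))"
        by (simp only: sum_distrib_left mult.assoc)
      then show ?thesis using h0 by linarith
    qed
    then show "\<exists>lam :: complex. lam \<noteq> 0 \<and>
             (\<Sum>l\<in>I. Re (lam * z l)) = 1 \<and> (\<Sum>l\<in>I. Im (lam * z l)) = 0 \<and>
             (\<Sum>l\<in>I. Re (lam * z l) * Im (lam * z l)) = 0" using lam0 sr si by blast
  qed
  show ?thesis
    using AB BC P3 D unfolding B_def I_def by blast
qed

end
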